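(* Let $D_1,D_2\subset\mathbb{C}^2$ be bounded balanced domains with Minkowski functions $\mu_1,\mu_2$ respectively. For $i=1,2$ let $L_{i,1},L_{i,2},L_{i,3}$ be three pairwise different complex lines through the origin in $\mathbb{C}^2$ (one-dimensional complex linear subspaces). Let $T:\mathbb{C}^2\to\mathbb{C}^2$ be an $\mathbb{R}$-linear map such that $\mu_1(X)=\mu_2(T(X))$ for all $X\in\mathbb{C}^2$ and $T(L_{1,1}\cup L_{1,2}\cup L_{1,3})=L_{2,1}\cup L_{2,2}\cup L_{2,3}$. Then $T$ is $\mathbb{C}$-linear or anti-$\mathbb{C}$-linear.
   Context: A domain $D\subset\mathbb{C}^n$ is balanced if $\lambda z\in D$ for all $z\in D$ and $\lambda\in\mathbb{C}$ with $|\lambda|\le 1$. Its Minkowski function is $\mu(X)=\inf\{t>0: X/t\in D\}$. An $\mathbb{R}$-linear map $T$ is anti-$\mathbb{C}$-linear if $T(\lambda X)=\bar\lambda T(X)$ for all $\lambda\in\mathbb{C}$. *)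

theory Defs
  imports "HOL-Analysis.Analysis"
begin

definition domain :: "(complex ^ 2) set \<Rightarrow> bool" where
  "domain D \<longleftrightarrow> open D \<and> connected D \<and> D \<noteq> {}"

definition balanced :: "(complex ^ 2) set \<Rightarrow> bool" where
  "balanced D \<longleftrightarrow> (\<forall>z\<in>D. \<forall>l::complex. cmod l \<le> 1 \<longrightarrow> l *s z \<in> D)"

definition minkowski :: "(complex ^ 2) set \<Rightarrow> complex ^ 2 \<Rightarrow> real" where
  "minkowski D X = Inf {t::real. t > 0 \<and> (1 / t) *\<^sub>R X \<in> D}"

definition complex_line :: "(complex ^ 2) set \<Rightarrow> bool" where
  "complex_line L \<longleftrightarrow> (\<exists>v. v \<noteq> 0 \<and> L = range (\<lambda>c::complex. c *s v))"

definition complex_linear :: "(complex ^ 2 \<Rightarrow> complex ^ 2) \<Rightarrow> bool" where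
  "complex_linear T \<longleftrightarrow> linear T \<and> (\<forall>(c::complex) X. T (c *s X) = c *s T X)"

definition anti_complex_linear :: "(complex ^ 2 \<Rightarrow> complex ^ 2) \<Rightarrow> bool" where
  "anti_complex_linear T \<longleftrightarrow> linear T \<and> (\<forall>(c::complex) X. T (c *s X) = cnj c *s T X)"

end

theory Submission
  imports Defs
begin
lemma ceq: "(c::complex) * z = of_real (Re c) * z + of_real (Im c) * (\<i> * z)"
  by (simp add: complex_eq_iff)

lemma sc: "(c::complex) *s (v::complex^2) = Re c *\<^sub>R v + Im c *\<^sub>R (\<i> *s v)"
  unfolding vec_eq_iff apply (rule allI)
  apply (simp only: vector_add_component vector_scaleR_component vector_smult_component)
  apply (simp only: scaleR_conv_of_real)
  apply (rule ceq)
  done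

lemma scaleR_smult: "r *\<^sub>R (u *s (X::complex^2)) = u *s (r *\<^sub>R X)"
  by (simp add: vec_eq_iff scaleR_conv_of_real)

lemma zero_in: "balanced D \<Longrightarrow> D \<noteq> {} \<Longrightarrow> 0 \<in> D"
proof -
  assume b: "balanced D" and ne: "D \<noteq> {}"
  then obtain z where z: "z \<in> D" by blast
  have "(0::complex) *s z \<in> D" using b z unfolding balanced_def by (metis norm_zero zero_le_one)
  then show ?thesis by simp
qed

lemma mk_nonempty:
  assumes "domain D" "balanced D"
  shows "\<exists>t>0. (1/t) *\<^sub>R X \<in> D"
proof -
  have "0 \<in> D" using assms zero_in unfolding domain_def by blast
  moreover have "open D" using assms unfolding domain_def by blast
  ultimately obtain e where e: "e > 0" "ball 0 e \<subseteq> D" using open_contains_ball by blast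
  define t where "t = (norm X + 1) / e"
  have t: "t > 0" using e unfolding t_def by (simp add: add_nonneg_pos)
  have "norm ((1/t) *\<^sub>R X) = norm X * e / (norm X + 1)"
    unfolding t_def using e by (simp add: field_simps)
  also have "\<dots> < e"
  proof -
    have p: "norm X + 1 > 0" by (simp add: add_nonneg_pos)
    have "norm X * e < e * (norm X + 1)" using e by (simp add: algebra_simps)
    then show ?thesis using p by (simp add: pos_divide_less_eq)
  qed
  finally have "(1/t) *\<^sub>R X \<in> ball 0 e" by simp
  then show ?thesis using t e by blast
qed

lemma mk_pos:
  assumes "domain D" "balanced D" "bounded D" "X \<noteq> 0"
  shows "minkowski D X > 0"
proof -
  obtain R where R: "R > 0" "\<forall>x\<in>D. norm x \<le> R" using assms(3) bounded_pos by blast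
  have low: "norm X / R \<le> t" if "t \<in> {t. t > 0 \<and> (1/t) *\<^sub>R X \<in> D}" for t
  proof -
    from that have t: "t > 0" "(1/t) *\<^sub>R X \<in> D" by auto
    then have "norm X / t \<le> R" using R by fastforce
    then show ?thesis using t R by (simp add: field_simps)
  qed
  have "norm X / R \<le> minkowski D X"
    unfolding minkowski_def
    apply (rule cInf_greatest)
    using mk_nonempty[OF assms(1,2)] low by auto
  moreover have "norm X / R > 0" using R assms(4) by simp
  ultimately show ?thesis by linarith
qed

lemma mk_scale:
  assumes "domain D" "balanced D" "r > 0"
  shows "minkowski D (r *\<^sub>R X) = r * minkowski D X"
proof -
  define S where "S = (\<lambda>Y. {t. t > (0::real) \<and> (1/t) *\<^sub>R Y \<in> D})"
  have ne: "S Y \<noteq> {}" for Y using mk_nonempty[OF assms(1,2)] unfolding S_def by auto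
  have bdd: "bdd_below (S Y)" for Y unfolding S_def by (rule bdd_belowI[where m=0]) auto
  have m: "minkowski D Y = Inf (S Y)" for Y unfolding minkowski_def S_def by simp
  have 1: "r * Inf (S X) \<le> Inf (S (r *\<^sub>R X))"
  proof (rule cInf_greatest[OF ne])
    fix t assume "t \<in> S (r *\<^sub>R X)"
    then have t: "t > 0" "(1/t) *\<^sub>R (r *\<^sub>R X) \<in> D" unfolding S_def by auto
    have "(1/(t/r)) *\<^sub>R X = (1/t) *\<^sub>R (r *\<^sub>R X)" using assms(3) by simp
    then have "t/r \<in> S X" using t assms(3) unfolding S_def by auto
    then have "Inf (S X) \<le> t/r" by (rule cInf_lower[OF _ bdd])
    then show "r * Inf (S X) \<le> t" using assms(3) by (simp add: field_simps)
  qed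
  have 2: "Inf (S (r *\<^sub>R X)) / r \<le> Inf (S X)"
  proof (rule cInf_greatest[OF ne])
    fix s assume "s \<in> S X"
    then have s: "s > 0" "(1/s) *\<^sub>R X \<in> D" unfolding S_def by auto
    have "(1/(r * s)) *\<^sub>R (r *\<^sub>R X) = (1/s) *\<^sub>R X" using assms(3) by simp
    then have "r * s \<in> S (r *\<^sub>R X)" using s assms(3) unfolding S_def by auto
    then have "Inf (S (r *\<^sub>R X)) \<le> r * s" by (rule cInf_lower[OF _ bdd])
    then show "Inf (S (r *\<^sub>R X)) / r \<le> s" using assms(3) by (simp add: field_simps)
  qed
  show ?thesis unfolding m using 1 2 assms(3) by (simp add: field_simps)
qed

lemma mk_unit:
  assumes "balanced D" "cmod u = 1"
  shows "minkowski D (u *s X) = minkowski D X"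
proof -
  have key: "u *s Y \<in> D \<longleftrightarrow> Y \<in> D" for Y
  proof
    assume "Y \<in> D" then show "u *s Y \<in> D" using assms unfolding balanced_def by simp
  next
    assume "u *s Y \<in> D"
    then have "cnj u *s (u *s Y) \<in> D" using assms unfolding balanced_def by (metis complex_mod_cnj order_refl)
    moreover have "cnj u * u = 1"
      using complex_norm_square[of u] assms(2) by (simp add: mult.commute)
    moreover have "cnj u *s (u *s Y) = (cnj u * u) *s Y" by (simp add: vector_smult_assoc)
    ultimately show "Y \<in> D" by simp
  qed
  show ?thesis unfolding minkowski_def scaleR_smult key ..
qed

lemma mk_zero:
  assumes "domain D" "balanced D"
  shows "minkowski D 0 = 0"
  using mk_scale[OF assms, of 2 0] by simp

lemma mk_hom:
  assumes "domain D" "balanced D"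
  shows "minkowski D (c *s X) = cmod c * minkowski D X"
proof (cases "c = 0")
  case True then show ?thesis using mk_zero[OF assms] by simp
next
  case False
  have e: "c *s X = cmod c *\<^sub>R ((c / complex_of_real (cmod c)) *s X)"
    using False apply (simp add: vec_eq_iff) apply (simp add: scaleR_conv_of_real)
    done
  have u: "cmod (c / complex_of_real (cmod c)) = 1" using False by (simp add: norm_divide)
  show ?thesis unfolding e using mk_scale[OF assms] mk_unit[OF assms(2) u] False by simp
qed
lemma line_span:
  assumes "complex_line L" "p \<in> L" "p \<noteq> 0" "q \<in> L"
  shows "\<exists>b. q = b *s p"
proof -
  obtain v where v: "L = range (\<lambda>c::complex. c *s v)" using assms(1) unfolding complex_line_def by blast
  obtain d0 where d0: "p = d0 *s v" using assms(2) v by blast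
  obtain d1 where d1: "q = d1 *s v" using assms(4) v by blast
  have "d0 \<noteq> 0" using assms(3) d0 by auto
  then have "q = (d1 / d0) *s p" unfolding d0 d1 by (simp add: vector_smult_assoc)
  then show ?thesis by blast
qed

lemma line_closed:
  assumes "complex_line L" "x \<in> L" "y \<in> L"
  shows "a *s x + b *s y \<in> L"
proof -
  obtain v where v: "L = range (\<lambda>c::complex. c *s v)" using assms(1) unfolding complex_line_def by blast
  obtain dx where dx: "x = dx *s v" using assms(2) v by blast
  obtain dy where dy: "y = dy *s v" using assms(3) v by blast
  have "a *s x + b *s y = (a * dx + b * dy) *s v" unfolding dx dy by (simp add: vec_eq_iff algebra_simps)
  then show ?thesis using v by (metis rangeI)
qed

lemma line_eq:
  assumes "w = l *s v" "l \<noteq> 0"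
  shows "range (\<lambda>c::complex. c *s w) = range (\<lambda>c. c *s v)"
proof
  show "range (\<lambda>c::complex. c *s w) \<subseteq> range (\<lambda>c. c *s v)"
  proof
    fix x assume "x \<in> range (\<lambda>c::complex. c *s w)"
    then obtain c where "x = c *s w" by blast
    then have "x = (c * l) *s v" using assms by (simp add: vector_smult_assoc)
    then show "x \<in> range (\<lambda>c. c *s v)" by blast
  qed
next
  show "range (\<lambda>c::complex. c *s v) \<subseteq> range (\<lambda>c. c *s w)"
  proof
    fix x assume "x \<in> range (\<lambda>c::complex. c *s v)"
    then obtain c where "x = c *s v" by blast
    then have "x = (c / l) *s w" using assms by (simp add: vector_smult_assoc)
    then show "x \<in> range (\<lambda>c. c *s w)" by blast
  qed
qed

lemma two_in:
  assumes "complex_line L" "x \<in> L" "y \<in> L"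
    "a *s x + b *s y = p" "c *s x + d *s y = q"
  shows "p \<in> L \<and> q \<in> L"
  using line_closed[OF assms(1-3)] assms(4,5) by blast

lemma pq_in:
  assumes "complex_line L"
    and "(p \<in> L \<and> q \<in> L) \<or> (p \<in> L \<and> p + q \<in> L) \<or> (p \<in> L \<and> p - q \<in> L) \<or>
         (q \<in> L \<and> p + q \<in> L) \<or> (q \<in> L \<and> p - q \<in> L) \<or> (p + q \<in> L \<and> p - q \<in> L)"
  shows "p \<in> L \<and> (q::complex^2) \<in> L"
  using assms(2)
proof (elim disjE conjE)
  assume "p \<in> L" "q \<in> L"
  then show ?thesis by blast
next
  assume "p \<in> L" "p + q \<in> L"
  then show ?thesis using two_in[OF assms(1), of p "p + q" 1 0 p "-1" 1 q]
    by (simp add: vec_eq_iff)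
next
  assume "p \<in> L" "p - q \<in> L"
  then show ?thesis using two_in[OF assms(1), of p "p - q" 1 0 p 1 "-1" q]
    by (simp add: vec_eq_iff)
next
  assume "q \<in> L" "p + q \<in> L"
  then show ?thesis using two_in[OF assms(1), of q "p + q" "-1" 1 p 1 0 q]
    by (simp add: vec_eq_iff)
next
  assume "q \<in> L" "p - q \<in> L"
  then show ?thesis using two_in[OF assms(1), of q "p - q" 1 1 p 1 0 q]
    by (simp add: vec_eq_iff)
next
  assume "p + q \<in> L" "p - q \<in> L"
  then show ?thesis using two_in[OF assms(1), of "p + q" "p - q" "1/2" "1/2" p "1/2" "-1/2" q]
    by (simp add: vec_eq_iff field_simps)
qed

lemma four:
  assumes "complex_line L1" "complex_line L2" "complex_line L3" "p \<noteq> 0"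
    "p \<in> L1 \<union> L2 \<union> L3" "q \<in> L1 \<union> L2 \<union> L3" "p + q \<in> L1 \<union> L2 \<union> L3" "p - q \<in> L1 \<union> L2 \<union> L3"
  shows "\<exists>b. q = b *s p"
proof -
  have "\<exists>L\<in>{L1,L2,L3}. (p \<in> L \<and> q \<in> L) \<or> (p \<in> L \<and> p + q \<in> L) \<or> (p \<in> L \<and> p - q \<in> L) \<or>
         (q \<in> L \<and> p + q \<in> L) \<or> (q \<in> L \<and> p - q \<in> L) \<or> (p + q \<in> L \<and> p - q \<in> L)"
    using assms(5-8) by blast
  then obtain L where L: "L \<in> {L1,L2,L3}" and h: "(p \<in> L \<and> q \<in> L) \<or> (p \<in> L \<and> p + q \<in> L) \<or> (p \<in> L \<and> p - q \<in> L) \<or>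
         (q \<in> L \<and> p + q \<in> L) \<or> (q \<in> L \<and> p - q \<in> L) \<or> (p + q \<in> L \<and> p - q \<in> L)" by blast
  have cl: "complex_line L" using L assms(1-3) by blast
  show ?thesis using pq_in[OF cl h] line_span[OF cl _ assms(4)] by blast
qed

lemma decomp:
  fixes v1 v2 X :: "complex^2"
  assumes "v1 \<noteq> 0" "\<not> (\<exists>l. v2 = l *s v1)"
  shows "\<exists>a b. X = a *s v1 + b *s v2"
proof -
  define det where "det = v1$1 * v2$2 - v1$2 * v2$1"
  have "det \<noteq> 0"
  proof
    assume d: "det = 0"
    show False
    proof (cases "v1$1 = 0")
      case True
      then have "v1$2 \<noteq> 0" using assms(1) by (auto simp: vec_eq_iff forall_2)
      moreover have "v2$1 = 0" using d True \<open>v1$2 \<noteq> 0\<close> unfolding det_def by simp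
      ultimately have "v2 = (v2$2 / v1$2) *s v1" using True by (simp add: vec_eq_iff forall_2)
      then show False using assms(2) by blast
    next
      case False
      have "v2$2 = v2$1 * v1$2 / v1$1" using d False unfolding det_def by (simp add: field_simps)
      then have "v2 = (v2$1 / v1$1) *s v1" using False by (simp add: vec_eq_iff forall_2)
      then show False using assms(2) by blast
    qed
  qed
  define a where "a = (X$1 * v2$2 - X$2 * v2$1) / det"
  define b where "b = (v1$1 * X$2 - v1$2 * X$1) / det"
  have e1: "(X$1 * v2$2 - X$2 * v2$1) * v1$1 + (v1$1 * X$2 - v1$2 * X$1) * v2$1 = X$1 * det"
    unfolding det_def by (simp add: algebra_simps)
  have e2: "(X$1 * v2$2 - X$2 * v2$1) * v1$2 + (v1$1 * X$2 - v1$2 * X$1) * v2$2 = X$2 * det"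
    unfolding det_def by (simp add: algebra_simps)
  have c1: "a * v1$1 + b * v2$1 = X$1"
  proof -
    have "a * v1$1 + b * v2$1 = ((X$1 * v2$2 - X$2 * v2$1) * v1$1 + (v1$1 * X$2 - v1$2 * X$1) * v2$1) / det"
      unfolding a_def b_def by (simp add: add_divide_distrib)
    also have "\<dots> = X$1" using e1 \<open>det \<noteq> 0\<close> by simp
    finally show ?thesis .
  qed
  have c2: "a * v1$2 + b * v2$2 = X$2"
  proof -
    have "a * v1$2 + b * v2$2 = ((X$1 * v2$2 - X$2 * v2$1) * v1$2 + (v1$1 * X$2 - v1$2 * X$1) * v2$2) / det"
      unfolding a_def b_def by (simp add: add_divide_distrib)
    also have "\<dots> = X$2" using e2 \<open>det \<noteq> 0\<close> by simp
    finally show ?thesis .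
  qed
  have "X = a *s v1 + b *s v2" using c1 c2 by (simp add: vec_eq_iff forall_2)
  then show ?thesis by blast
qed

lemma indep:
  fixes p1 p2 :: "complex^2"
  assumes "p1 \<noteq> 0" "\<not> (\<exists>l. p2 = l *s p1)" "x *s p1 + y *s p2 = 0"
  shows "x = 0 \<and> y = 0"
proof -
  have "y = 0"
  proof (rule ccontr)
    assume y: "y \<noteq> 0"
    have "p2 = (- x / y) *s p1"
      using assms(3) y by (simp add: vec_eq_iff field_simps) (metis add_eq_0_iff mult.commute)
    then show False using assms(2) by blast
  qed
  then show ?thesis using assms(1,3) by simp
qed
lemma b_unit:
  assumes "cmod b = 1" "cmod (1 + b) = sqrt 2"
  shows "b = \<i> \<or> b = - \<i>"
proof -
  have 1: "(Re b)^2 + (Im b)^2 = 1" using assms(1) cmod_power2[of b] by simp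
  have "(cmod (1 + b))^2 = 2" using assms(2) by simp
  then have 2: "(1 + Re b)^2 + (Im b)^2 = 2" using cmod_power2[of "1 + b"] by simp
  have r: "Re b = 0" using 1 2 by (simp add: power2_eq_square algebra_simps)
  then have "(Im b)^2 = 1" using 1 by simp
  then have "Im b = 1 \<or> Im b = -1" by (simp add: power2_eq_1_iff)
  then show ?thesis using r by (auto simp: complex_eq_iff)
qed

lemma behave:
  assumes d1: "domain D1" "bounded D1" "balanced D1"
    and d2: "domain D2" "bounded D2" "balanced D2"
    and lin: "linear T"
    and mk: "\<forall>X. minkowski D1 X = minkowski D2 (T X)"
    and v: "v \<noteq> 0" and Tv: "T v \<noteq> 0"
    and b: "T (\<i> *s v) = b *s T v"
  shows "(\<forall>c. T (c *s v) = c *s T v) \<or> (\<forall>c. T (c *s v) = cnj c *s T v)"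
proof -
  have m: "minkowski D1 v > 0" using mk_pos[OF d1(1,3,2) v] .
  have "minkowski D1 (\<i> *s v) = minkowski D1 v" using mk_hom[OF d1(1,3)] by simp
  moreover have "minkowski D1 (\<i> *s v) = cmod b * minkowski D1 v"
    using mk b mk_hom[OF d2(1,3)] by metis
  ultimately have bn: "cmod b = 1" using m by simp
  have e: "(1 + \<i>) *s v = v + \<i> *s v" by (simp add: vec_eq_iff algebra_simps)
  have "T ((1 + \<i>) *s v) = (1 + b) *s T v" unfolding e using lin b
    by (simp add: linear_add vec_eq_iff algebra_simps)
  then have "minkowski D1 ((1 + \<i>) *s v) = cmod (1 + b) * minkowski D1 v"
    using mk mk_hom[OF d2(1,3)] by metis
  moreover have "minkowski D1 ((1 + \<i>) *s v) = cmod (1 + \<i>) * minkowski D1 v"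
    using mk_hom[OF d1(1,3), of "1 + \<i>" v] by simp
  ultimately have "cmod (1 + b) = cmod (1 + \<i>)" using m by simp
  moreover have "cmod (1 + \<i>) = sqrt 2" by (simp add: cmod_def)
  ultimately have bb: "b = \<i> \<or> b = - \<i>" using b_unit bn by simp
  have Tc: "T (c *s v) = Re c *\<^sub>R T v + Im c *\<^sub>R (b *s T v)" for c
    using lin b by (subst sc) (simp add: linear_add linear_scale)
  from bb show ?thesis
  proof
    assume "b = \<i>"
    then have "T (c *s v) = c *s T v" for c using Tc sc by metis
    then show ?thesis by blast
  next
    assume bi: "b = - \<i>"
    have "T (c *s v) = cnj c *s T v" for c
      unfolding Tc bi by (subst sc) (simp add: vec_eq_iff scaleR_conv_of_real)
    then show ?thesis by blast
  qed
qed
lemma mixed: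
  assumes lin: "linear T"
    and h1: "\<forall>c. T (c *s v1) = c *s T v1"
    and h2: "\<forall>c. T (c *s v2) = cnj c *s T v2"
    and v3: "v3 = \<alpha> *s v1 + \<beta> *s v2" and a: "\<alpha> \<noteq> 0" and b: "\<beta> \<noteq> 0"
    and h3: "(\<forall>c. T (c *s v3) = c *s T v3) \<or> (\<forall>c. T (c *s v3) = cnj c *s T v3)"
    and ind: "\<forall>x y. x *s T v1 + y *s T v2 = 0 \<longrightarrow> x = 0 \<and> y = 0"
  shows False
proof -
  have Tv3: "T v3 = \<alpha> *s T v1 + cnj \<beta> *s T v2" using v3 lin h1 h2 by (simp add: linear_add)
  have "\<i> *s v3 = (\<i> * \<alpha>) *s v1 + (\<i> * \<beta>) *s v2" using v3 by (simp add: vec_eq_iff algebra_simps)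
  then have Ti: "T (\<i> *s v3) = (\<i> * \<alpha>) *s T v1 + (- \<i> * cnj \<beta>) *s T v2"
    using lin h1 h2 by (simp add: linear_add)
  have diff: "x = x' \<and> y = y'" if "x *s T v1 + y *s T v2 = x' *s T v1 + y' *s T v2" for x y x' y'
  proof -
    have "(x - x') *s T v1 + (y - y') *s T v2 = 0" using that
      by (simp add: vec_eq_iff algebra_simps)
    then have "x - x' = 0 \<and> y - y' = 0" using ind by blast
    then show ?thesis by simp
  qed
  from h3 show False
  proof
    assume "\<forall>c. T (c *s v3) = c *s T v3"
    then have "T (\<i> *s v3) = (\<i> * \<alpha>) *s T v1 + (\<i> * cnj \<beta>) *s T v2"
      unfolding Tv3 by (simp add: vec_eq_iff algebra_simps)
    then have "- \<i> * cnj \<beta> = \<i> * cnj \<beta>" using diff Ti by metis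
    then have "cnj \<beta> = 0" by (simp add: complex_eq_iff)
    then show False using b by simp
  next
    assume "\<forall>c. T (c *s v3) = cnj c *s T v3"
    then have "T (\<i> *s v3) = (- \<i> * \<alpha>) *s T v1 + (- \<i> * cnj \<beta>) *s T v2"
      unfolding Tv3 by (simp add: vec_eq_iff algebra_simps)
    then have "- \<i> * \<alpha> = \<i> * \<alpha>" using diff Ti by metis
    then have "\<alpha> = 0" by (simp add: complex_eq_iff)
    then show False using a by simp
  qed
qed

lemma per_line:
  assumes l2: "complex_line L21" "complex_line L22" "complex_line L23"
    and lin: "linear T" and Tv: "T v \<noteq> 0"
    and L: "L = range (\<lambda>c::complex. c *s v)"
    and im: "T ` L \<subseteq> L21 \<union> L22 \<union> L23"
  shows "\<exists>b. T (\<i> *s v) = b *s T v"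
proof -
  have "c *s v \<in> L" for c using L by blast
  then have m: "T (c *s v) \<in> L21 \<union> L22 \<union> L23" for c using im by blast
  have "T v = T (1 *s v)" by simp
  have e1: "T v + T (\<i> *s v) = T ((1 + \<i>) *s v)" using lin by (simp add: linear_add[symmetric] vec_eq_iff algebra_simps)
  have e2: "T v - T (\<i> *s v) = T ((1 - \<i>) *s v)" using lin by (simp add: linear_diff[symmetric] vec_eq_iff algebra_simps)
  show ?thesis
    apply (rule four[OF l2 Tv])
    using m[of 1] m[of \<i>] m[of "1 + \<i>"] m[of "1 - \<i>"] e1 e2 by auto
qed
theorem lemma5:
  fixes D1 D2 :: "(complex ^ 2) set"
    and L11 L12 L13 L21 L22 L23 :: "(complex ^ 2) set"
    and T :: "complex ^ 2 \<Rightarrow> complex ^ 2"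
  assumes "domain D1" "bounded D1" "balanced D1"
    and "domain D2" "bounded D2" "balanced D2"
    and "complex_line L11" "complex_line L12" "complex_line L13"
    and "L11 \<noteq> L12" "L11 \<noteq> L13" "L12 \<noteq> L13"
    and "complex_line L21" "complex_line L22" "complex_line L23"
    and "L21 \<noteq> L22" "L21 \<noteq> L23" "L22 \<noteq> L23"
    and "linear T"
    and "\<forall>X. minkowski D1 X = minkowski D2 (T X)"
    and "T ` (L11 \<union> L12 \<union> L13) = L21 \<union> L22 \<union> L23"
  shows "complex_linear T \<or> anti_complex_linear T"
proof -
  note d1 = assms(1-3) and d2 = assms(4-6) and lin = assms(19) and mk = assms(20)
  have T0: "T X \<noteq> 0" if "X \<noteq> 0" for X
  proof
    assume "T X = 0"
    then have "minkowski D1 X = 0" using mk mk_zero[OF d2(1,3)] by metis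
    then show False using mk_pos[OF d1(1,3,2) that] by simp
  qed
  have Tinj: "x = y" if "T x = T y" for x y
  proof (rule ccontr)
    assume "x \<noteq> y"
    then have "T (x - y) \<noteq> 0" using T0 by simp
    then show False using that lin by (simp add: linear_diff)
  qed
  obtain v1 where v1: "v1 \<noteq> 0" "L11 = range (\<lambda>c. c *s v1)" using assms(7) unfolding complex_line_def by blast
  obtain v2 where v2: "v2 \<noteq> 0" "L12 = range (\<lambda>c. c *s v2)" using assms(8) unfolding complex_line_def by blast
  obtain v3 where v3: "v3 \<noteq> 0" "L13 = range (\<lambda>c. c *s v3)" using assms(9) unfolding complex_line_def by blast
  have beh: "(\<forall>c. T (c *s v) = c *s T v) \<or> (\<forall>c. T (c *s v) = cnj c *s T v)"
    if hv: "v \<noteq> 0" "L = range (\<lambda>c. c *s v)" "L \<subseteq> L11 \<union> L12 \<union> L13" for v L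
  proof -
    have "T ` L \<subseteq> L21 \<union> L22 \<union> L23" using hv(3) assms(21) by blast
    then obtain b where "T (\<i> *s v) = b *s T v"
      using per_line[OF assms(13-15) lin T0[OF hv(1)] hv(2)] by blast
    then show ?thesis using behave[OF d1 d2 lin mk hv(1) T0[OF hv(1)]] by blast
  qed
  have b1: "(\<forall>c. T (c *s v1) = c *s T v1) \<or> (\<forall>c. T (c *s v1) = cnj c *s T v1)"
    using beh[OF v1(1,2)] v1(2) by blast
  have b2: "(\<forall>c. T (c *s v2) = c *s T v2) \<or> (\<forall>c. T (c *s v2) = cnj c *s T v2)"
    using beh[OF v2(1,2)] v2(2) by blast
  have b3: "(\<forall>c. T (c *s v3) = c *s T v3) \<or> (\<forall>c. T (c *s v3) = cnj c *s T v3)"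
    using beh[OF v3(1,2)] v3(2) by blast
  have notmul: "\<not> (\<exists>l. w = l *s v)"
    if "v \<noteq> 0" "w \<noteq> 0" "range (\<lambda>c. c *s w) \<noteq> range (\<lambda>c::complex. c *s v)" for v w
  proof
    assume "\<exists>l. w = l *s v"
    then obtain l where l: "w = l *s v" by blast
    then have "l \<noteq> 0" using that(2) by auto
    then show False using line_eq[OF l] that(3) by blast
  qed
  have n12: "\<not> (\<exists>l. v2 = l *s v1)" using notmul[OF v1(1) v2(1)] v1 v2 assms(10) by metis
  obtain \<alpha> \<beta> where ab: "v3 = \<alpha> *s v1 + \<beta> *s v2" using decomp[OF v1(1) n12] by blast
  have a0: "\<alpha> \<noteq> 0"
  proof
    assume "\<alpha> = 0"
    then have "v3 = \<beta> *s v2" using ab by simp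
    then show False using notmul[OF v2(1) v3(1)] v2 v3 assms(12) by metis
  qed
  have b0: "\<beta> \<noteq> 0"
  proof
    assume "\<beta> = 0"
    then have "v3 = \<alpha> *s v1" using ab by simp
    then show False using notmul[OF v1(1) v3(1)] v1 v3 assms(11) by metis
  qed
  have np: "\<not> (\<exists>l. T v2 = l *s T v1)"
  proof
    assume "\<exists>l. T v2 = l *s T v1"
    then obtain l where l: "T v2 = l *s T v1" by blast
    from b1 have "\<exists>m. T v2 = T (m *s v1)"
    proof
      assume "\<forall>c. T (c *s v1) = c *s T v1"
      then show ?thesis using l by metis
    next
      assume "\<forall>c. T (c *s v1) = cnj c *s T v1"
      then have "T (cnj l *s v1) = l *s T v1" by simp
      then show ?thesis using l by metis
    qed
    then show False using Tinj n12 by blast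
  qed
  have ind: "\<forall>x y. x *s T v1 + y *s T v2 = 0 \<longrightarrow> x = 0 \<and> y = 0"
    using indep[OF T0[OF v1(1)] np] by blast
  have ind': "\<forall>x y. x *s T v2 + y *s T v1 = 0 \<longrightarrow> x = 0 \<and> y = 0"
    using ind by (metis add.commute)
  have ab': "v3 = \<beta> *s v2 + \<alpha> *s v1" using ab by (simp add: add.commute)
  have dec: "\<exists>a b. X = a *s v1 + b *s v2" for X using decomp[OF v1(1) n12] .
  from b1 show ?thesis
  proof
    assume l1: "\<forall>c. T (c *s v1) = c *s T v1"
    from b2 show ?thesis
    proof
      assume l2: "\<forall>c. T (c *s v2) = c *s T v2"
      have "T (c *s X) = c *s T X" for c X
      proof -
        obtain a b where X: "X = a *s v1 + b *s v2" using dec by blast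
        have "c *s X = (c * a) *s v1 + (c * b) *s v2" unfolding X by (simp add: vec_eq_iff algebra_simps)
        then have "T (c *s X) = (c * a) *s T v1 + (c * b) *s T v2" using lin l1 l2 by (simp add: linear_add)
        moreover have "T X = a *s T v1 + b *s T v2" using X lin l1 l2 by (simp add: linear_add)
        ultimately show ?thesis by (simp add: vec_eq_iff algebra_simps)
      qed
      then show ?thesis using lin unfolding complex_linear_def by blast
    next
      assume l2: "\<forall>c. T (c *s v2) = cnj c *s T v2"
      show ?thesis using mixed[OF lin l1 l2 ab a0 b0 b3 ind] ..
    qed
  next
    assume l1: "\<forall>c. T (c *s v1) = cnj c *s T v1"
    from b2 show ?thesis
    proof
      assume l2: "\<forall>c. T (c *s v2) = c *s T v2"
      show ?thesis using mixed[OF lin l2 l1 ab' b0 a0 b3 ind'] ..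
    next
      assume l2: "\<forall>c. T (c *s v2) = cnj c *s T v2"
      have "T (c *s X) = cnj c *s T X" for c X
      proof -
        obtain a b where X: "X = a *s v1 + b *s v2" using dec by blast
        have "c *s X = (c * a) *s v1 + (c * b) *s v2" unfolding X by (simp add: vec_eq_iff algebra_simps)
        then have "T (c *s X) = cnj (c * a) *s T v1 + cnj (c * b) *s T v2" using lin l1 l2 by (simp add: linear_add)
        moreover have "T X = cnj a *s T v1 + cnj b *s T v2" using X lin l1 l2 by (simp add: linear_add)
        ultimately show ?thesis by (simp add: vec_eq_iff algebra_simps)
      qed
      then show ?thesis using lin unfolding anti_complex_linear_def by blast
    qed
  qed
qed

end
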